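(* Let $\beta\in[0,1]$, $n\in\mathbb{N}$, and let $u:\{k\in\mathbb{N}_0^3: k_1+k_2+k_3\le n\}\to[0,\infty]$ be a function such that for every $m\in\{0,\dots,n\}$ the restriction of $u$ to $\{k\in\mathbb{N}_0^3: k_1+k_2+k_3=m\}$ is an upper $\beta$-confidence bound for the parameter $p\mapsto \min\{\frac{1-p_2}{1-p_1},1\}$ in the trinomial model $(\mathrm{M}_{m,p}: p\in\mathrm{prob}(\{1,2,3\}))$. Then the function $k\mapsto u(k_{10},k_{01},k_{11})$ on $\{k\in\mathbb{N}_0^{\{0,1\}^2}:k_{++}=n\}$ is an upper $\beta$-confidence bound for the parameter $(\pi,\chi)\mapsto\chi^{(1)}_{1|1}$ in the restricted latent class model $\mathcal{P}_{2,\le}$.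
   Context: Convention: $x/0:=\infty$ for $x>0$. For a finite set $\mathcal{X}$, $\mathrm{prob}(\mathcal{X})$ is the set of probability densities on $\mathcal{X}$; $\mathrm{markov}(\mathcal{X},\mathcal{Y})$ the set of maps $(x,y)\mapsto p_{y|x}$ with $p_{\cdot|x}\in\mathrm{prob}(\mathcal{Y})$ for all $x$. $\mathrm{M}_{n,p}$ denotes the multinomial distribution with sample size $n$ and probability vector $p$. A subscript $+$ denotes summation over the replaced index. Let $\Theta_2:=\mathrm{prob}(\{0,1\})\times\mathrm{markov}(\{0,1\},\{0,1\}^2)$, $\theta=(\pi,\chi)$, $\mu(\theta)_j=\sum_{i=0}^1\pi_i\chi_{j|i}$ for $j\in\{0,1\}^2$, $P_\theta:=\mathrm{M}_{n,\mu(\theta)}$ on $\{k\in\mathbb{N}_0^{\{0,1\}^2}:k_{++}=n\}$. Put $\chi^{(1)}_{\iota|i}:=\chi_{\iota0|i}+\chi_{\iota1|i}$ and $\chi^{(2)}_{\iota|i}:=\chi_{0\iota|i}+\chi_{1\iota|i}$. The restricted latent class model is $\mathcal{P}_{2,\le}:=(P_\theta:\theta\in\Theta_{2,\le})$ with $\Theta_{2,\le}:=\{(\pi,\chi)\in\Theta_2:\chi^{(1)}_{0|0}\le\chi^{(2)}_{0|0}\}$. For a model $(P_\theta:\theta\in\Theta)$ and parameter $\kappa:\Theta\to\overline{\mathbb{R}}$, a measurable $\overline{\kappa}$ is an upper $\beta$-confidence bound if $P_\theta(\overline{\kappa}\ge\kappa(\theta))\ge\beta$ for all $\theta\in\Theta$.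 *)

theory Defs
  imports "HOL-Analysis.Analysis" "HOL-Library.Extended_Nonnegative_Real"
begin

definition prob_dens :: "'i set \<Rightarrow> ('i \<Rightarrow> real) \<Rightarrow> bool" where
  "prob_dens I p \<longleftrightarrow> (\<forall>i\<in>I. 0 \<le> p i) \<and> sum p I = 1"

definition mult_space :: "'i set \<Rightarrow> nat \<Rightarrow> ('i \<Rightarrow> nat) set" where
  "mult_space I n = {k. (\<forall>i. i \<notin> I \<longrightarrow> k i = 0) \<and> sum k I = n}"

definition mult_pmf :: "'i set \<Rightarrow> nat \<Rightarrow> ('i \<Rightarrow> real) \<Rightarrow> ('i \<Rightarrow> nat) \<Rightarrow> real" where
  "mult_pmf I n p k = fact n / (\<Prod>i\<in>I. fact (k i)) * (\<Prod>i\<in>I. p i ^ k i)"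

definition mult_prob :: "'i set \<Rightarrow> nat \<Rightarrow> ('i \<Rightarrow> real) \<Rightarrow> ('i \<Rightarrow> nat) set \<Rightarrow> real" where
  "mult_prob I n p A = (\<Sum>k\<in>mult_space I n \<inter> A. mult_pmf I n p k)"

text \<open>Upper beta-confidence bound kbar for kappa in the model (M_{n,mu theta} : theta in Theta).
  (Measurability is automatic on the finite discrete sample space.)\<close>
definition upper_conf_bound ::
  "real \<Rightarrow> 'i set \<Rightarrow> nat \<Rightarrow> 't set \<Rightarrow> ('t \<Rightarrow> 'i \<Rightarrow> real)
     \<Rightarrow> ('t \<Rightarrow> ennreal) \<Rightarrow> (('i \<Rightarrow> nat) \<Rightarrow> ennreal) \<Rightarrow> bool" where
  "upper_conf_bound \<beta> I n \<Theta> \<mu> \<kappa> kbar \<longleftrightarrow>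
     (\<forall>\<theta>\<in>\<Theta>. mult_prob I n (\<mu> \<theta>) {k. kbar k \<ge> \<kappa> \<theta>} \<ge> \<beta>)"

text \<open>Trinomial model: categories {1,2,3}.  Parameter min{(1-p2)/(1-p1),1}, with x/0 = \<infinity> for x>0
  (if p1 = 1 then p2 = 0 so the numerator is positive and the min equals 1).\<close>
definition trin_param :: "(nat \<Rightarrow> real) \<Rightarrow> ennreal" where
  "trin_param p = (if p 1 = 1 then 1 else ennreal (min ((1 - p 2) / (1 - p 1)) 1))"

definition trip :: "nat \<Rightarrow> nat \<Rightarrow> nat \<Rightarrow> (nat \<Rightarrow> nat)" where
  "trip a b c = (\<lambda>i. if i = 1 then a else if i = 2 then b else if i = 3 then c else 0)"

text \<open>Latent class model with two latent classes {0,1} and observations in {0,1}^2.\<close>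
definition Theta2 :: "((nat \<Rightarrow> real) \<times> (nat \<Rightarrow> nat \<times> nat \<Rightarrow> real)) set" where
  "Theta2 = {(w, c). prob_dens {0,1} w \<and> (\<forall>i\<in>{0,1}. prob_dens ({0,1} \<times> {0,1}) (c i))}"

definition mu2 :: "(nat \<Rightarrow> real) \<times> (nat \<Rightarrow> nat \<times> nat \<Rightarrow> real) \<Rightarrow> nat \<times> nat \<Rightarrow> real" where
  "mu2 \<theta> = (\<lambda>j. \<Sum>i\<in>{0,1}. fst \<theta> i * snd \<theta> i j)"

definition chi1 :: "(nat \<Rightarrow> nat \<times> nat \<Rightarrow> real) \<Rightarrow> nat \<Rightarrow> nat \<Rightarrow> real" where
  "chi1 c \<iota> i = c i (\<iota>, 0) + c i (\<iota>, 1)"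

definition chi2 :: "(nat \<Rightarrow> nat \<times> nat \<Rightarrow> real) \<Rightarrow> nat \<Rightarrow> nat \<Rightarrow> real" where
  "chi2 c \<iota> i = c i (0, \<iota>) + c i (1, \<iota>)"

definition Theta2_le :: "((nat \<Rightarrow> real) \<times> (nat \<Rightarrow> nat \<times> nat \<Rightarrow> real)) set" where
  "Theta2_le = {\<theta> \<in> Theta2. chi1 (snd \<theta>) 0 0 \<le> chi2 (snd \<theta>) 0 0}"

end

theory Submission imports Defs begin
lemma sq4: "({0::nat,1}\<times>{0::nat,1}) = {(0,0),(0,1),(1,0),(1,1)}" by auto
lemma sum4: "sum f ({0::nat,1}\<times>{0::nat,1}) = f(0,0)+f(0,1)+f(1,0)+f(1,1)"
  unfolding sq4 by (simp add: algebra_simps)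
lemma prod4: "prod f ({0::nat,1}\<times>{0::nat,1}) = f(0,0)*f(0,1)*f(1,0)*f(1,1)"
  unfolding sq4 by (simp add: algebra_simps)
lemma trip_eq: "k \<in> mult_space {1,2,3} m \<Longrightarrow> trip (k 1) (k 2) (k 3) = k"
  by (auto simp: trip_def mult_space_def fun_eq_iff)
lemma trip_space: "trip a b c \<in> mult_space {1,2,3} (a+b+c)"
  by (auto simp: trip_def mult_space_def)
lemma fin3: "finite (mult_space {1::nat,2,3} m)"
proof -
  have "mult_space {1::nat,2,3} m \<subseteq> (\<lambda>(a,b,c). trip a b c) ` ({..m}\<times>{..m}\<times>{..m})"
  proof
    fix k assume k: "k \<in> mult_space {1::nat,2,3} m"
    then have "k 1 \<le> m" "k 2 \<le> m" "k 3 \<le> m" by (auto simp: mult_space_def)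
    then show "k \<in> (\<lambda>(a,b,c). trip a b c) ` ({..m}\<times>{..m}\<times>{..m})"
      using trip_eq[OF k] by (auto intro!: image_eqI[where x="(k 1, k 2, k 3)"])
  qed
  then show ?thesis by (rule finite_subset) auto
qed

lemma decomp:
  fixes \<mu> :: "nat\<times>nat \<Rightarrow> real" and p :: "nat \<Rightarrow> real" and s :: real and P :: "(nat\<Rightarrow>nat) \<Rightarrow> bool"
  assumes A: "\<mu>(1,0) = s*p 1" "\<mu>(0,1) = s*p 2" "\<mu>(1,1) = s*p 3"
  shows "mult_prob ({0,1}\<times>{0,1}) n \<mu> {k. P (trip (k(1,0)) (k(0,1)) (k(1,1)))}
       = (\<Sum>m\<le>n. of_nat (n choose m) * \<mu>(0,0)^(n-m) * s^m * mult_prob {1,2,3} m p {k. P k})"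
proof -
  define T where "T = Sigma {..n} (\<lambda>m. mult_space {1::nat,2,3} m \<inter> {k. P k})"
  define S where "S = mult_space ({0::nat,1}\<times>{0::nat,1}) n \<inter> {k. P (trip (k(1,0)) (k(0,1)) (k(1,1)))}"
  define h where "h = (\<lambda>(m::nat,k'::nat\<Rightarrow>nat). (\<lambda>ij::nat\<times>nat. if ij=(0,0) then n-m else if ij=(1,0) then k' 1 else if ij=(0,1) then k' 2 else if ij=(1,1) then k' 3 else 0))"
  define G where "G = (\<lambda>(m,k'). of_nat (n choose m) * \<mu>(0,0)^(n-m) * s^m * mult_pmf {1::nat,2,3} m p k')"
  have inj: "inj_on h T"
  proof (rule inj_onI)
    fix x y assume x: "x \<in> T" and y: "y \<in> T" and e: "h x = h y"
    obtain m k' where xe: "x = (m,k')" by (cases x)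
    obtain m2 k2 where ye: "y = (m2,k2)" by (cases y)
    have km: "k' \<in> mult_space {1,2,3} m" "m \<le> n" using x xe T_def by auto
    have km2: "k2 \<in> mult_space {1,2,3} m2" "m2 \<le> n" using y ye T_def by auto
    have "h x (0,0) = h y (0,0)" "h x (1,0) = h y (1,0)" "h x (0,1) = h y (0,1)" "h x (1,1) = h y (1,1)"
      using e by auto
    then have "n - m = n - m2" "k' 1 = k2 1" "k' 2 = k2 2" "k' 3 = k2 3"
      by (auto simp: h_def xe ye)
    then have "m = m2" "k' = k2" using km km2 trip_eq[OF km(1)] trip_eq[OF km2(1)] by auto
    then show "x = y" using xe ye by simp
  qed
  have img: "h ` T = S"
  proof
    show "h ` T \<subseteq> S"
    proof
      fix z assume "z \<in> h ` T"
      then obtain m k' where mk: "(m,k') \<in> T" "z = h (m,k')" by auto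
      have km: "k' \<in> mult_space {1,2,3} m" "m \<le> n" "P k'" using mk T_def by auto
      have sm: "k' 1 + k' 2 + k' 3 = m" using km(1) by (simp add: mult_space_def)
      have hv: "h (m,k') (0,0) = n-m" "h (m,k') (1,0) = k' 1" "h (m,k') (0,1) = k' 2" "h (m,k') (1,1) = k' 3"
        by (simp_all add: h_def)
      have z0: "\<forall>i. i \<notin> {0,1}\<times>{0,1} \<longrightarrow> h (m,k') i = 0"
      proof (intro allI impI)
        fix i :: "nat\<times>nat" assume "i \<notin> {0,1}\<times>{0,1}"
        then have "i \<noteq> (0,0)" "i \<noteq> (1,0)" "i \<noteq> (0,1)" "i \<noteq> (1,1)" by auto
        then show "h (m,k') i = 0" by (simp add: h_def)
      qed
      have "sum (h (m,k')) ({0,1}\<times>{0,1}) = n" unfolding sum4 hv using sm km(2) by simp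
      then have "h (m,k') \<in> mult_space ({0,1}\<times>{0,1}) n" using z0 unfolding mult_space_def by simp
      moreover have "P (trip (h (m,k') (1,0)) (h (m,k') (0,1)) (h (m,k') (1,1)))"
        unfolding hv trip_eq[OF km(1)] by (rule km(3))
      ultimately show "z \<in> S" unfolding S_def mk(2) by simp
    qed
  next
    show "S \<subseteq> h ` T"
    proof
      fix k assume k: "k \<in> S"
      have k1: "k \<in> mult_space ({0,1}\<times>{0,1}) n" and kP: "P (trip (k(1,0)) (k(0,1)) (k(1,1)))"
        using k unfolding S_def by simp_all
      have s: "k (0,0) + k (0,1) + k (1,0) + k(1,1) = n"
        using k1 unfolding mult_space_def sum4 by simp
      have z: "\<And>i. i \<notin> {0,1}\<times>{0,1} \<Longrightarrow> k i = 0"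
        using k1 unfolding mult_space_def by blast
      define m where "m = k (1,0) + k (0,1) + k (1,1)"
      have "trip (k (1,0)) (k (0,1)) (k (1,1)) \<in> mult_space {1,2,3} m"
        unfolding m_def by (rule trip_space)
      moreover have "m \<in> {..n}" using s unfolding m_def by simp
      ultimately have "(m, trip (k (1,0)) (k (0,1)) (k (1,1))) \<in> T"
        using kP unfolding T_def by simp
      moreover have "k = h (m, trip (k (1,0)) (k (0,1)) (k (1,1)))"
      proof
        fix ij :: "nat\<times>nat"
        show "k ij = h (m, trip (k (1,0)) (k (0,1)) (k (1,1))) ij"
        proof (cases "ij \<in> {0,1}\<times>{0,1}")
          case True
          then have "ij = (0,0) \<or> ij = (1,0) \<or> ij = (0,1) \<or> ij = (1,1)" by auto
          then show ?thesis using s by (elim disjE) (simp_all add: h_def trip_def m_def)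
        next
          case False
          then have "ij \<noteq> (0,0)" "ij \<noteq> (1,0)" "ij \<noteq> (0,1)" "ij \<noteq> (1,1)" by auto
          then show ?thesis using z[OF False] by (simp add: h_def)
        qed
      qed
      ultimately show "k \<in> h ` T" by blast
    qed
  qed
  have bij: "bij_betw h T S" using inj img by (simp add: bij_betw_def)
  have tm: "mult_pmf ({0,1}\<times>{0,1}) n \<mu> (h x) = G x" if "x \<in> T" for x
  proof -
    obtain m k' where xe: "x = (m,k')" by (cases x)
    have km: "k' \<in> mult_space {1,2,3} m" "m \<le> n" using that xe T_def by auto
    define a b c where "a = k' 1" and "b = k' 2" and "c = k' 3"
    have hv: "h (m,k') (0,0) = n-m" "h (m,k') (1,0) = k' 1" "h (m,k') (0,1) = k' 2" "h (m,k') (1,1) = k' 3"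
      by (simp_all add: h_def)
    have m: "m = a + b + c" using km(1) by (simp add: mult_space_def a_def b_def c_def)
    have C: "real (n choose m) = fact n / (fact m * fact (n - m))" using km(2) by (simp add: binomial_fact)
    have "mult_pmf ({0,1}\<times>{0,1}) n \<mu> (h x) = fact n / (fact (n-m) * fact b * fact a * fact c) *
        (\<mu>(0,0)^(n-m) * (s*p 2)^b * (s*p 1)^a * (s*p 3)^c)"
      unfolding xe mult_pmf_def prod4 hv A a_def b_def c_def by (simp only: mult.assoc)
    also have "\<dots> = G x"
    proof -
      have pf: "(\<Prod>i\<in>{1::nat,2,3}. fact (k' i)) = (fact a * fact b * fact c :: real)"
        by (simp add: a_def b_def c_def)
      have pp: "(\<Prod>i\<in>{1::nat,2,3}. p i ^ k' i) = p 1 ^ a * p 2 ^ b * p 3 ^ c"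
        by (simp add: a_def b_def c_def)
      have nz: "(fact a :: real) \<noteq> 0" "(fact b :: real) \<noteq> 0" "(fact c :: real) \<noteq> 0"
        "(fact (n-m) :: real) \<noteq> 0" "(fact m :: real) \<noteq> 0" by simp_all
      have "G x = fact n / (fact m * fact (n - m)) * \<mu>(0,0)^(n-m) * s^(a+b+c) *
          (fact m / (fact a * fact b * fact c) * (p 1 ^ a * p 2 ^ b * p 3 ^ c))"
      proof -
        have "G x = of_nat (n choose m) * \<mu>(0,0)^(n-m) * s^m * mult_pmf {1,2,3} m p k'"
          by (simp add: G_def xe)
        also have "\<dots> = fact n / (fact m * fact (n - m)) * \<mu>(0,0)^(n-m) * s^m *
          (fact m / (fact a * fact b * fact c) * (p 1 ^ a * p 2 ^ b * p 3 ^ c))"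
          unfolding mult_pmf_def pf pp C by (rule refl)
        finally show ?thesis by (simp only: m)
      qed
      also have "\<dots> = fact n / (fact (n-m) * fact b * fact a * fact c) *
        (\<mu>(0,0)^(n-m) * (s*p 2)^b * (s*p 1)^a * (s*p 3)^c)"
        using nz by (simp add: power_add power_mult_distrib field_simps)
      finally show ?thesis by simp
    qed
    finally show ?thesis .
  qed
  have "mult_prob ({0,1}\<times>{0,1}) n \<mu> {k. P (trip (k(1,0)) (k(0,1)) (k(1,1)))} = sum (mult_pmf ({0,1}\<times>{0,1}) n \<mu>) S"
    by (simp add: mult_prob_def S_def)
  also have "\<dots> = sum (\<lambda>x. mult_pmf ({0,1}\<times>{0,1}) n \<mu> (h x)) T"
    using sum.reindex_bij_betw[OF bij, of "mult_pmf ({0,1}\<times>{0,1}) n \<mu>"] by (rule sym)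
  also have "\<dots> = sum G T" using tm by (rule sum.cong[OF refl])
  also have "\<dots> = (\<Sum>m\<le>n. \<Sum>k'\<in>mult_space {1,2,3} m \<inter> {k. P k}. G (m,k'))"
  proof -
    have fin3': "\<And>m. finite (mult_space {1::nat,2,3} m \<inter> {k. P k})" using fin3 by blast
    show ?thesis unfolding T_def by (subst sum.Sigma[OF _ ballI[OF fin3']]) auto
  qed
  also have "\<dots> = (\<Sum>m\<le>n. of_nat (n choose m) * \<mu>(0,0)^(n-m) * s^m * mult_prob {1,2,3} m p {k. P k})"
    by (simp add: G_def mult_prob_def sum_distrib_left)
  finally show ?thesis .
qed

lemma pmf_nonneg3:
  assumes "prob_dens {1::nat,2,3} p"
  shows "0 \<le> mult_pmf {1,2,3} m p k"
proof -
  have "\<forall>i\<in>{1::nat,2,3}. 0 \<le> p i" using assms by (simp add: prob_dens_def)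
  then have "0 \<le> (\<Prod>i\<in>{1::nat,2,3}. p i ^ k i)" by (intro prod_nonneg) auto
  then show ?thesis unfolding mult_pmf_def by (intro mult_nonneg_nonneg divide_nonneg_pos) auto
qed

lemma prob_mono3:
  assumes "prob_dens {1::nat,2,3} p" "A \<subseteq> B"
  shows "mult_prob {1,2,3} m p A \<le> mult_prob {1,2,3} m p B"
  unfolding mult_prob_def
  by (rule sum_mono2) (use assms fin3 pmf_nonneg3 in auto)

lemma chi_bound:
  fixes w :: "nat \<Rightarrow> real" and c :: "nat \<Rightarrow> nat\<times>nat \<Rightarrow> real"
  assumes w: "0 \<le> w 0" "0 \<le> w 1"
    and c: "\<And>i j. i \<in> {0,1} \<Longrightarrow> j \<in> {0,1}\<times>{0,1} \<Longrightarrow> 0 \<le> c i j"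
    and c1: "c 1 (0,0) + c 1 (0,1) + c 1 (1,0) + c 1 (1,1) = 1"
    and le: "c 0 (0,1) \<le> c 0 (1,0)"
  shows "(c 1 (1,0) + c 1 (1,1)) * ((w 0 * c 0 (0,1) + w 1 * c 1 (0,1)) + (w 0 * c 0 (1,1) + w 1 * c 1 (1,1)))
     \<le> (w 0 * c 0 (1,0) + w 1 * c 1 (1,0)) + (w 0 * c 0 (1,1) + w 1 * c 1 (1,1))"
proof -
  define x where "x = c 1 (1,0) + c 1 (1,1)"
  define a where "a = c 0 (0,1) + c 0 (1,1)"
  define A where "A = c 0 (1,0) + c 0 (1,1)"
  define b where "b = c 1 (0,1) + c 1 (1,1)"
  have x0: "0 \<le> x" and x1: "x \<le> 1" using c[of 1 "(1,0)"] c[of 1 "(1,1)"] c[of 1 "(0,0)"] c[of 1 "(0,1)"] c1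
    by (auto simp: x_def)
  have a0: "0 \<le> a" using c[of 0 "(0,1)"] c[of 0 "(1,1)"] by (simp add: a_def)
  have aA: "a \<le> A" using le by (simp add: a_def A_def)
  have b1: "b \<le> 1" using c[of 1 "(1,0)"] c[of 1 "(0,0)"] c1 by (simp add: b_def)
  have "x * a \<le> 1 * a" by (rule mult_right_mono[OF x1 a0])
  then have h1: "w 0 * (x * a) \<le> w 0 * A" using aA by (intro mult_left_mono[OF _ w(1)]) simp
  have "x * b \<le> x * 1" by (rule mult_left_mono[OF b1 x0])
  then have h2: "w 1 * (x * b) \<le> w 1 * x" by (intro mult_left_mono[OF _ w(2)]) simp
  have "x * (w 0 * a + w 1 * b) = w 0 * (x * a) + w 1 * (x * b)" by (simp add: algebra_simps)
  also have "\<dots> \<le> w 0 * A + w 1 * x" using h1 h2 by linarith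
  finally have "x * (w 0 * a + w 1 * b) \<le> w 0 * A + w 1 * x" .
  then show ?thesis unfolding x_def a_def A_def b_def by (simp add: algebra_simps)
qed


theorem theorem2:
  fixes \<beta> :: real and n :: nat and u :: "(nat \<Rightarrow> nat) \<Rightarrow> ennreal"
  assumes "0 \<le> \<beta>" and "\<beta> \<le> 1" and "n \<ge> 1"
    and "\<forall>m\<le>n. upper_conf_bound \<beta> {1,2,3} m {p. prob_dens {1,2,3} p} (\<lambda>p. p) trin_param u"
  shows "upper_conf_bound \<beta> ({0,1} \<times> {0,1}) n Theta2_le mu2 (\<lambda>\<theta>. ennreal (chi1 (snd \<theta>) 1 1))
           (\<lambda>k. u (trip (k (1,0)) (k (0,1)) (k (1,1))))"
  unfolding upper_conf_bound_def
proof
  fix \<theta> assume th: "\<theta> \<in> Theta2_le"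
  obtain w c where te: "\<theta> = (w,c)" by (cases \<theta>)
  have wd: "prob_dens {0,1} w" and cd: "\<forall>i\<in>{0,1}. prob_dens ({0,1}\<times>{0,1}) (c i)"
    and cle: "chi1 c 0 0 \<le> chi2 c 0 0"
    using th unfolding te Theta2_le_def Theta2_def by auto
  have w: "0 \<le> w 0" "0 \<le> w 1" "w 0 + w 1 = 1" using wd by (auto simp: prob_dens_def)
  have c: "\<And>i j. i \<in> {0,1} \<Longrightarrow> j \<in> {0,1}\<times>{0,1} \<Longrightarrow> 0 \<le> c i j"
    using cd by (auto simp: prob_dens_def)
  have cs: "\<And>i. i \<in> {0,1} \<Longrightarrow> c i (0,0) + c i (0,1) + c i (1,0) + c i (1,1) = 1"
    using cd by (auto simp: prob_dens_def sum4)
  have le: "c 0 (0,1) \<le> c 0 (1,0)" using cle by (simp add: chi1_def chi2_def)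
  define \<mu> where "\<mu> = mu2 \<theta>"
  have \<mu>e: "\<And>j. \<mu> j = w 0 * c 0 j + w 1 * c 1 j" by (simp add: \<mu>_def mu2_def te)
  have \<mu>0: "\<And>j. j \<in> {0,1}\<times>{0,1} \<Longrightarrow> 0 \<le> \<mu> j"
    using c w by (simp add: \<mu>e)
  define q0 where "q0 = \<mu> (0,0)"
  define s where "s = \<mu>(1,0) + \<mu>(0,1) + \<mu>(1,1)"
  have q0s: "s + q0 = 1"
  proof -
    have "s + q0 = w 0 * (c 0 (0,0) + c 0 (0,1) + c 0 (1,0) + c 0 (1,1)) + w 1 * (c 1 (0,0) + c 1 (0,1) + c 1 (1,0) + c 1 (1,1))"
      by (simp add: s_def q0_def \<mu>e algebra_simps)
    also have "\<dots> = 1" using cs[of 0] cs[of 1] w by simp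
    finally show ?thesis .
  qed
  have m10: "0 \<le> \<mu>(1,0)" and m01: "0 \<le> \<mu>(0,1)" and m11: "0 \<le> \<mu>(1,1)" and q00: "0 \<le> q0"
    using \<mu>0 by (auto simp: q0_def)
  have s0: "0 \<le> s" using m10 m01 m11 by (simp add: s_def)
  define p :: "nat \<Rightarrow> real" where "p = (if s = 0 then (\<lambda>i. if i = 1 then 1 else 0)
      else (\<lambda>i. if i = 1 then \<mu>(1,0)/s else if i = 2 then \<mu>(0,1)/s else if i = 3 then \<mu>(1,1)/s else 0))"
  have Aall: "\<mu>(1,0) = s*p 1 \<and> \<mu>(0,1) = s*p 2 \<and> \<mu>(1,1) = s*p 3"
  proof (cases "s = 0")
    case True
    then have "\<mu>(1,0) = 0" "\<mu>(0,1) = 0" "\<mu>(1,1) = 0" using m10 m01 m11 s_def by linarith+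
    then show ?thesis using True by simp
  next
    case False
    then show ?thesis by (simp add: p_def)
  qed
  then have A: "\<mu>(1,0) = s*p 1" "\<mu>(0,1) = s*p 2" "\<mu>(1,1) = s*p 3" by auto
  have pd: "prob_dens {1,2,3} p"
  proof (cases "s = 0")
    case True
    then show ?thesis by (simp add: p_def prob_dens_def)
  next
    case False
    then have sp: "0 < s" using s0 by simp
    have "\<mu>(1,0)/s + (\<mu>(0,1)/s + \<mu>(1,1)/s) = (\<mu>(1,0) + \<mu>(0,1) + \<mu>(1,1))/s" by (simp add: add_divide_distrib)
    then have "\<mu>(1,0)/s + (\<mu>(0,1)/s + \<mu>(1,1)/s) = 1" using sp unfolding s_def[symmetric] by simp
    then show ?thesis using False sp m10 m01 m11 by (simp add: p_def prob_dens_def)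
  qed
  define xx where "xx = chi1 c 1 1"
  have xxe: "xx = c 1 (1,0) + c 1 (1,1)" by (simp add: xx_def chi1_def)
  have xx1: "xx \<le> 1" using cs[of 1] c[of 1 "(0,0)"] c[of 1 "(0,1)"] by (simp add: xxe)
  have bound: "ennreal xx \<le> trin_param p"
  proof (cases "p 1 = 1")
    case True
    then show ?thesis using xx1 by (simp add: trin_param_def)
  next
    case False
    then have sn: "s \<noteq> 0" by (auto simp: p_def)
    then have sp: "0 < s" using s0 by simp
    have p1: "p 1 = \<mu>(1,0)/s" "p 2 = \<mu>(0,1)/s" using sn by (simp_all add: p_def)
    have d: "\<mu>(0,1) + \<mu>(1,1) \<noteq> 0"
    proof
      assume "\<mu>(0,1) + \<mu>(1,1) = 0"
      then have "\<mu>(1,0) = s" by (simp add: s_def)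
      then show False using False p1 sn by simp
    qed
    then have dp: "0 < \<mu>(0,1) + \<mu>(1,1)" using m01 m11 by linarith
    have r: "(1 - p 2) / (1 - p 1) = (\<mu>(1,0) + \<mu>(1,1)) / (\<mu>(0,1) + \<mu>(1,1))"
    proof -
      have e1: "1 - p 2 = (s - \<mu>(0,1))/s" using sn unfolding p1 by (simp add: diff_divide_distrib)
      have e2: "1 - p 1 = (s - \<mu>(1,0))/s" using sn unfolding p1 by (simp add: diff_divide_distrib)
      have "s - \<mu>(0,1) = \<mu>(1,0) + \<mu>(1,1)" "s - \<mu>(1,0) = \<mu>(0,1) + \<mu>(1,1)" by (simp_all add: s_def)
      then show ?thesis unfolding e1 e2 using sn by simp
    qed
    have "xx * (\<mu>(0,1) + \<mu>(1,1)) \<le> \<mu>(1,0) + \<mu>(1,1)"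
      unfolding xxe \<mu>e using chi_bound[OF w(1,2) c cs[of 1] le] by simp
    then have "xx \<le> (1 - p 2) / (1 - p 1)" unfolding r using dp by (simp add: pos_le_divide_eq)
    then have "xx \<le> min ((1 - p 2) / (1 - p 1)) 1" using xx1 by simp
    then have "ennreal xx \<le> ennreal (min ((1 - p 2) / (1 - p 1)) 1)" by (rule ennreal_leI)
    then show ?thesis using False unfolding trin_param_def by simp
  qed
  have Q: "\<beta> \<le> mult_prob {1,2,3} m p {k. ennreal xx \<le> u k}" if "m \<le> n" for m
  proof -
    have "\<beta> \<le> mult_prob {1,2,3} m p {k. trin_param p \<le> u k}"
      using assms(4) that pd unfolding upper_conf_bound_def by auto
    also have "\<dots> \<le> mult_prob {1,2,3} m p {k. ennreal xx \<le> u k}"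
      by (rule prob_mono3[OF pd]) (use bound order_trans in auto)
    finally show ?thesis .
  qed
  have "\<beta> = \<beta> * (s + q0)^n" using q0s by simp
  also have "\<dots> = (\<Sum>m\<le>n. of_nat (n choose m) * q0^(n-m) * s^m * \<beta>)"
    by (simp add: binomial_ring sum_distrib_left mult_ac)
  also have "\<dots> \<le> (\<Sum>m\<le>n. of_nat (n choose m) * q0^(n-m) * s^m * mult_prob {1,2,3} m p {k. ennreal xx \<le> u k})"
    by (rule sum_mono, rule mult_left_mono) (use Q q00 s0 in auto)
  also have "\<dots> = mult_prob ({0,1}\<times>{0,1}) n \<mu> {k. ennreal xx \<le> u (trip (k(1,0)) (k(0,1)) (k(1,1)))}"
    unfolding q0_def by (rule decomp[OF A, symmetric])
  finally show "\<beta> \<le> mult_prob ({0,1}\<times>{0,1}) n (mu2 \<theta>) {k. ennreal (chi1 (snd \<theta>) 1 1) \<le> u (trip (k (1,0)) (k (0,1)) (k (1,1)))}"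
    by (simp add: \<mu>_def xx_def te)
qed

end
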